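(* For every $i=0,\ldots,n$, $$Y_i=\operatorname*{ess\,sup}_{\tau\in\bar{\mathcal S}_i} Y^{(\tau)}_i,$$ where, for $\tau\in\bar{\mathcal S}_i$, $(Y^{(\tau)}_j)_{i\le j\le\tau}$ is the adapted integrable solution of $$Y^{(\tau)}_\tau=S_\tau,\qquad Y^{(\tau)}_j=E_j[Y^{(\tau)}_{j+1}]+f\big(j,Y^{(\tau)}_j,E_j[\beta_{j+1}Y^{(\tau)}_{j+1}]\big)\Delta_j,\quad i\le j<\tau .$$ Moreover, the stopping time $\tau^*_i$ attains the essential supremum, i.e. $Y_i=Y^{(\tau^*_i)}_i$.
   Context: Standing setting: $n\ge 1$ and $D\ge 1$ are integers; $(\Omega,\mathcal F,(\mathcal F_i)_{i=0,\ldots,n},P)$ is a filtered probability space and $E_i[\cdot]=E[\cdot\mid\mathcal F_i]$. The constants $\Delta_0,\ldots,\Delta_{n-1}$ are positive reals. $S=(S_i)_{i=0,\ldots,n}$ is an adapted process with values in $\mathbb R\cup\{-\infty\}$, $S_n$ real-valued, with $\sum_{i=0}^{n-1}E[|S_i\mathbf 1_{\{S_i>-\infty\}}|]+E[|S_n|]<\infty$. The random field $f:\Omega\times\{0,\ldots,n-1\}\times\mathbb R\times\mathbb R^D\to\mathbb R$ is measurable, $f(\cdot,i,y,z)$ is $\mathcal F_i$-measurable for every $(y,z)$ (the dependence on $\omega$ is suppressed), $\sum_{i=0}^{n-1}E[|f(i,0,0)|]<\infty$, and there are adapted nonnegative processes $\alpha^{(0)},\ldots,\alpha^{(D)}$ with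 $|f(i,y,z)-f(i,y',z')|\le\alpha^{(0)}_i|y-y'|+\sum_{d=1}^D\alpha^{(d)}_i|z_d-z'_d|$ for all $(y,z),(y',z')\in\mathbb R\times\mathbb R^D$. $\beta=(\beta_i)_{i=1,\ldots,n}$ is a bounded adapted $\mathbb R^D$-valued process, and for $i=0,\ldots,n-1$ almost surely $\alpha^{(0)}_i<1/\Delta_i$ and $\sum_{d=1}^D\alpha^{(d)}_i|\beta_{d,i+1}|\le 1/\Delta_i$. $Y$ denotes the unique adapted integrable process with $Y_n=S_n$ and $Y_i=\max\{S_i,\;E_i[Y_{i+1}]+f(i,Y_i,E_i[\beta_{i+1}Y_{i+1}])\Delta_i\}$ for $i=0,\ldots,n-1$. $\bar{\mathcal S}_i$ is the set of stopping times $\tau$ with $\tau\ge i$ and $S_\tau>-\infty$ (i.e. $\tau(\omega)\in\{j: S_j(\omega)>-\infty\}$ for all $\omega$). $\tau^*_i:=\inf\{j\ge i:\; S_j\ge E_j[Y_{j+1}]+f(j,Y_j,E_j[\beta_{j+1}Y_{j+1}])\Delta_j\}\wedge n$. *)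

theory Defs
  imports "HOL-Probability.Probability"
begin

definition is_esssup_family ::
  "'a measure \<Rightarrow> 'b set \<Rightarrow> ('b \<Rightarrow> 'a \<Rightarrow> real) \<Rightarrow> ('a \<Rightarrow> real) \<Rightarrow> bool" where
  "is_esssup_family M T X Z \<longleftrightarrow>
     Z \<in> borel_measurable M \<and>
     (\<forall>t\<in>T. AE \<omega> in M. X t \<omega> \<le> Z \<omega>) \<and>
     (\<forall>Z' \<in> borel_measurable M. (\<forall>t\<in>T. AE \<omega> in M. X t \<omega> \<le> Z' \<omega>) \<longrightarrow>
        (AE \<omega> in M. Z \<omega> \<le> Z' \<omega>))"

definition Sbar ::
  "'a measure \<Rightarrow> (nat \<Rightarrow> 'a measure) \<Rightarrow> (nat \<Rightarrow> 'a \<Rightarrow> ereal) \<Rightarrow> nat \<Rightarrow> nat \<Rightarrow> ('a \<Rightarrow> nat) set" where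
  "Sbar M F S n i = {\<tau>. stopping_time F \<tau> \<and>
      (\<forall>\<omega>\<in>space M. i \<le> \<tau> \<omega> \<and> \<tau> \<omega> \<le> n \<and> S (\<tau> \<omega>) \<omega> \<noteq> -\<infinity>)}"

definition cond_exp_vec ::
  "'a measure \<Rightarrow> 'a measure \<Rightarrow> ('a \<Rightarrow> real ^ 'd) \<Rightarrow> ('a \<Rightarrow> real) \<Rightarrow> 'a \<Rightarrow> real ^ 'd" where
  "cond_exp_vec M G b X = (\<lambda>\<omega>. \<chi> d. real_cond_exp M G (\<lambda>\<eta>. b \<eta> $ d * X \<eta>) \<omega>)"

definition driver ::
  "'a measure \<Rightarrow> (nat \<Rightarrow> 'a measure) \<Rightarrow> (nat \<Rightarrow> 'a \<Rightarrow> real \<Rightarrow> real ^ 'd \<Rightarrow> real) \<Rightarrow>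
   (nat \<Rightarrow> 'a \<Rightarrow> real ^ 'd) \<Rightarrow> (nat \<Rightarrow> real) \<Rightarrow> (nat \<Rightarrow> 'a \<Rightarrow> real) \<Rightarrow> nat \<Rightarrow> 'a \<Rightarrow> real" where
  "driver M F f \<beta> \<Delta> X j \<omega> =
     real_cond_exp M (F j) (X (Suc j)) \<omega>
     + f j \<omega> (X j \<omega>) (cond_exp_vec M (F j) (\<beta> (Suc j)) (X (Suc j)) \<omega>) * \<Delta> j"

definition tau_star ::
  "'a measure \<Rightarrow> (nat \<Rightarrow> 'a measure) \<Rightarrow> (nat \<Rightarrow> 'a \<Rightarrow> real \<Rightarrow> real ^ 'd \<Rightarrow> real) \<Rightarrow>
   (nat \<Rightarrow> 'a \<Rightarrow> real ^ 'd) \<Rightarrow> (nat \<Rightarrow> real) \<Rightarrow> (nat \<Rightarrow> 'a \<Rightarrow> ereal) \<Rightarrow> (nat \<Rightarrow> 'a \<Rightarrow> real) \<Rightarrow>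
   nat \<Rightarrow> nat \<Rightarrow> 'a \<Rightarrow> nat" where
  "tau_star M F f \<beta> \<Delta> S Y n i = (\<lambda>\<omega>. LEAST j. i \<le> j \<and>
     (j = n \<or> (j < n \<and> S j \<omega> \<ge> ereal (driver M F f \<beta> \<Delta> Y j \<omega>))))"

end

theory Submission
  imports Defs
begin


lemma floor_approx:
  fixes x :: real
  shows "\<bar>real_of_int \<lfloor>x * 2^k\<rfloor> / 2^k - x\<bar> \<le> 1 / 2^k"
proof -
  have p: "(0::real) < 2^k" by simp
  have a: "real_of_int \<lfloor>x * 2^k\<rfloor> \<le> x * 2^k" by (rule of_int_floor_le)
  have b: "x * 2^k - 1 < real_of_int \<lfloor>x * 2^k\<rfloor>" by linarith
  have "\<bar>real_of_int \<lfloor>x * 2^k\<rfloor> - x * 2^k\<bar> \<le> 1" using a b by linarith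
  then have "\<bar>real_of_int \<lfloor>x * 2^k\<rfloor> - x * 2^k\<bar> / 2^k \<le> 1 / 2^k"
    using p by (simp add: divide_right_mono)
  moreover have "\<bar>real_of_int \<lfloor>x * 2^k\<rfloor> - x * 2^k\<bar> / 2^k = \<bar>real_of_int \<lfloor>x * 2^k\<rfloor> / 2^k - x\<bar>"
    using p by (simp add: field_simps abs_div_pos[symmetric] )
  ultimately show ?thesis by simp
qed

lemma carath:
  fixes f :: "'a \<Rightarrow> real \<Rightarrow> real^'d \<Rightarrow> real"
  assumes sec: "\<And>y z. (\<lambda>\<omega>. f \<omega> y z) \<in> borel_measurable G"
  and lip: "\<And>\<omega> y y' z z'. \<omega> \<in> space G \<Longrightarrow>
      \<bar>f \<omega> y z - f \<omega> y' z'\<bar> \<le> a \<omega> * \<bar>y-y'\<bar> + (\<Sum>d\<in>UNIV. b d \<omega> * \<bar>z$d - z'$d\<bar>)"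
  and g: "g \<in> borel_measurable G" and h: "\<And>d. (\<lambda>\<omega>. h \<omega> $ d) \<in> borel_measurable G"
  shows "(\<lambda>\<omega>. f \<omega> (g \<omega>) (h \<omega>)) \<in> borel_measurable G"
proof -
  define r where "r k x = real_of_int \<lfloor>x * 2^k\<rfloor> / 2^k" for k and x :: real
  define u where "u k \<omega> = f \<omega> (r k (g \<omega>)) (\<chi> d. r k (h \<omega> $ d))" for k \<omega>
  have meas: "u k \<in> borel_measurable G" for k
  proof -
    define idx where "idx \<omega> = (\<lfloor>g \<omega> * 2^k\<rfloor>, \<lambda>d. \<lfloor>h \<omega> $ d * 2^k\<rfloor>)" for \<omega>
    define \<Phi> where "\<Phi> = (\<lambda>(m::int, p::'d \<Rightarrow> int) \<omega>. f \<omega> (real_of_int m / 2^k) (\<chi> d. real_of_int (p d) / 2^k))"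
    have "u k = (\<lambda>\<omega>. \<Phi> (idx \<omega>) \<omega>)"
      by (auto simp: u_def \<Phi>_def idx_def r_def fun_eq_iff)
    moreover have "(\<lambda>\<omega>. \<Phi> (idx \<omega>) \<omega>) \<in> borel_measurable G"
    proof (rule measurable_compose_countable'[where I=UNIV and f=\<Phi> and g=idx])
      show "(\<lambda>\<omega>. \<Phi> i \<omega>) \<in> borel_measurable G" for i
      proof -
        obtain m p where i: "i = (m, p)" by force
        show ?thesis by (simp add: i \<Phi>_def sec)
      qed
      show "countable (UNIV :: (int \<times> ('d \<Rightarrow> int)) set)" by simp
      show "idx \<in> measurable G (count_space UNIV)"
      proof (subst measurable_count_space_eq2_countable, safe)
        fix mp :: "int \<times> ('d \<Rightarrow> int)"
        obtain m p where mp: "mp = (m, p)" by force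
        have "idx -` {mp} \<inter> space G = {\<omega> \<in> space G. \<lfloor>g \<omega> * 2^k\<rfloor> = m \<and> (\<forall>d\<in>UNIV. \<lfloor>h \<omega> $ d * 2^k\<rfloor> = p d)}"
          by (auto simp: idx_def mp fun_eq_iff)
        also have "\<dots> \<in> sets G"
          using g h by measurable
        finally show "idx -` {mp} \<inter> space G \<in> sets G" .
      qed simp_all
    qed
    ultimately show ?thesis by simp
  qed
  have e: "\<bar>r k x - x\<bar> \<le> 1/2^k" for k x unfolding r_def by (rule floor_approx)
  have m: "c * \<bar>r k x - x\<bar> \<le> \<bar>c\<bar> * (1/2^k)" for c k x
  proof -
    have "c * \<bar>r k x - x\<bar> \<le> \<bar>c\<bar> * \<bar>r k x - x\<bar>" by (simp add: mult_right_mono)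
    also have "\<dots> \<le> \<bar>c\<bar> * (1/2^k)" using e[of k x] by (rule mult_left_mono) simp
    finally show ?thesis .
  qed
  have conv: "(\<lambda>k. u k \<omega>) \<longlonglongrightarrow> f \<omega> (g \<omega>) (h \<omega>)" if \<omega>: "\<omega> \<in> space G" for \<omega>
  proof (rule LIM_zero_cancel, rule Lim_null_comparison)
    define C where "C = \<bar>a \<omega>\<bar> + (\<Sum>d\<in>UNIV. \<bar>b d \<omega>\<bar>)"
    show "\<forall>\<^sub>F k in sequentially. norm (u k \<omega> - f \<omega> (g \<omega>) (h \<omega>)) \<le> C * (1/2)^k"
    proof (rule always_eventually, rule allI)
      fix k
      have "norm (u k \<omega> - f \<omega> (g \<omega>) (h \<omega>)) \<le> a \<omega> * \<bar>r k (g \<omega>) - g \<omega>\<bar>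
          + (\<Sum>d\<in>UNIV. b d \<omega> * \<bar>(\<chi> d. r k (h \<omega> $ d)) $ d - h \<omega> $ d\<bar>)"
        unfolding u_def real_norm_def by (rule lip[OF \<omega>])
      also have "\<dots> \<le> \<bar>a \<omega>\<bar> * (1/2^k) + (\<Sum>d\<in>UNIV. \<bar>b d \<omega>\<bar> * (1/2^k))"
      proof (rule add_mono)
        show "a \<omega> * \<bar>r k (g \<omega>) - g \<omega>\<bar> \<le> \<bar>a \<omega>\<bar> * (1/2^k)"
          by (rule m)
        show "(\<Sum>d\<in>UNIV. b d \<omega> * \<bar>(\<chi> d. r k (h \<omega> $ d)) $ d - h \<omega> $ d\<bar>) \<le> (\<Sum>d\<in>UNIV. \<bar>b d \<omega>\<bar> * (1/2^k))"
          by (rule sum_mono) (simp only: vec_lambda_beta m)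
      qed
      also have "\<dots> = C * (1/2)^k"
        by (simp add: C_def power_one_over add_divide_distrib sum_divide_distrib)
      finally show "norm (u k \<omega> - f \<omega> (g \<omega>) (h \<omega>)) \<le> C * (1/2)^k" .
    qed
    show "(\<lambda>k. C * (1/2)^k) \<longlonglongrightarrow> 0"
      by (intro tendsto_mult_right_zero LIMSEQ_power_zero) simp
  qed
  show ?thesis
    by (rule borel_measurable_LIMSEQ_real[OF conv meas])
qed



lemma vecnth_meas:
  fixes g :: "'a \<Rightarrow> real^'d"
  assumes g: "g \<in> borel_measurable M" shows "(\<lambda>x. g x $ d) \<in> borel_measurable M"
proof -
  have "(\<lambda>v::real^'d. v $ d) \<in> borel_measurable borel"
    by (rule borel_measurable_continuous_onI) (intro continuous_intros)
  from measurable_compose[OF g this] show ?thesis .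
qed

lemma integrable_bdd_mult:
  fixes U b :: "'a \<Rightarrow> real"
  assumes "integrable M U" "b \<in> borel_measurable M" "\<And>x. x \<in> space M \<Longrightarrow> \<bar>b x\<bar> \<le> B"
  shows "integrable M (\<lambda>x. b x * U x)"
proof (rule Bochner_Integration.integrable_bound[where f="\<lambda>x. B * U x"])
  show "integrable M (\<lambda>x. B * U x)" using assms(1) by simp
  show "(\<lambda>x. b x * U x) \<in> borel_measurable M" using assms(1,2) by measurable
  show "AE x in M. norm (b x * U x) \<le> norm (B * U x)"
  proof (rule AE_I2)
    fix x assume x: "x \<in> space M"
    have "\<bar>b x\<bar> * \<bar>U x\<bar> \<le> \<bar>B\<bar> * \<bar>U x\<bar>"
      using assms(3)[OF x] by (intro mult_right_mono) auto
    then show "norm (b x * U x) \<le> norm (B * U x)" by (simp add: abs_mult)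
  qed
qed

lemma ce_loc_diff:
  fixes U V b :: "'a \<Rightarrow> real"
  assumes sfs: "sigma_finite_subalgebra M G" and A: "A \<in> sets G"
    and U: "integrable M U" and V: "integrable M V"
    and b: "b \<in> borel_measurable M" and bb: "\<And>x. x \<in> space M \<Longrightarrow> \<bar>b x\<bar> \<le> B"
  shows "AE x in M. x \<in> A \<longrightarrow> real_cond_exp M G (\<lambda>\<eta>. b \<eta> * U \<eta>) x - real_cond_exp M G (\<lambda>\<eta>. b \<eta> * V \<eta>) x
      = real_cond_exp M G (\<lambda>\<eta>. b \<eta> * (indicator A \<eta> * (U \<eta> - V \<eta>))) x"
proof -
  interpret sigma_finite_subalgebra M G by (rule sfs)
  have AM: "A \<in> sets M" using A subalg by (meson subalgebra_def subsetD)
  have iU: "integrable M (\<lambda>\<eta>. b \<eta> * U \<eta>)" by (rule integrable_bdd_mult[OF U b bb])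
  have iV: "integrable M (\<lambda>\<eta>. b \<eta> * V \<eta>)" by (rule integrable_bdd_mult[OF V b bb])
  have iD: "integrable M (\<lambda>\<eta>. b \<eta> * U \<eta> - b \<eta> * V \<eta>)" using iU iV by simp
  have e1: "AE x in M. real_cond_exp M G (\<lambda>\<eta>. b \<eta> * U \<eta> - b \<eta> * V \<eta>) x
      = real_cond_exp M G (\<lambda>\<eta>. b \<eta> * U \<eta>) x - real_cond_exp M G (\<lambda>\<eta>. b \<eta> * V \<eta>) x"
    by (rule real_cond_exp_diff[OF iU iV])
  have e2: "AE x in M. real_cond_exp M G (\<lambda>\<eta>. indicator A \<eta> * (b \<eta> * U \<eta> - b \<eta> * V \<eta>)) x
      = indicator A x * real_cond_exp M G (\<lambda>\<eta>. b \<eta> * U \<eta> - b \<eta> * V \<eta>) x"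
  proof (rule real_cond_exp_mult)
    show "indicator A \<in> borel_measurable G" using A by measurable
    show "(\<lambda>\<eta>. b \<eta> * U \<eta> - b \<eta> * V \<eta>) \<in> borel_measurable M" using iD by measurable
    show "integrable M (\<lambda>\<eta>. indicator A \<eta> * (b \<eta> * U \<eta> - b \<eta> * V \<eta>))"
      using integrable_mult_indicator[OF AM iD] by simp
  qed
  have fe: "(\<lambda>\<eta>. b \<eta> * (indicator A \<eta> * (U \<eta> - V \<eta>))) = (\<lambda>\<eta>. indicator A \<eta> * (b \<eta> * U \<eta> - b \<eta> * V \<eta>))"
    by (auto simp: fun_eq_iff algebra_simps)
  show ?thesis using e1 e2 unfolding fe by eventually_elim auto
qed

lemma ce_zero:
  assumes sfs: "sigma_finite_subalgebra M G" and "AE x in M. h x = 0" and "h \<in> borel_measurable M"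
  shows "AE x in M. real_cond_exp M G h x = 0"
proof -
  interpret sigma_finite_subalgebra M G by (rule sfs)
  have "AE x in M. real_cond_exp M G h x = real_cond_exp M G (\<lambda>_. 0) x"
    by (rule real_cond_exp_cong) (use assms in auto)
  moreover have "AE x in M. real_cond_exp M G (\<lambda>_. 0) x = 0"
    by (rule real_cond_exp_F_meas) auto
  ultimately show ?thesis by eventually_elim auto
qed

lemma arith1:
  fixes \<Delta> a0 u v cU cV fU fV S c :: real
  assumes "\<Delta> > 0" "a0 < 1/\<Delta>" "u \<ge> cU + fU*\<Delta>" "v = cV + fV*\<Delta>"
    "\<bar>fU - fV\<bar> \<le> a0*\<bar>u-v\<bar> + S" "S \<le> c/\<Delta>" "cU - cV = c"
  shows "v \<le> u"
proof (rule ccontr)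
  assume "\<not> v \<le> u"
  then have e: "u - v < 0" by simp
  have t: "\<Delta> * a0 < 1" using assms(1,2) by (simp add: field_simps)
  have DS: "\<Delta> * S \<le> c" using assms(1,6) by (simp add: field_simps)
  have "fU - fV \<ge> - (a0*\<bar>u-v\<bar> + S)" using assms(5) by linarith
  then have "(fU - fV)*\<Delta> \<ge> - (a0*\<bar>u-v\<bar> + S)*\<Delta>" using assms(1) by (intro mult_right_mono) auto
  then have "u - v \<ge> c - \<Delta>*a0*\<bar>u-v\<bar> - \<Delta>*S" using assms(3,4,7) by (simp add: algebra_simps)
  then have "u - v \<ge> - \<Delta>*a0*\<bar>u-v\<bar>" using DS by linarith
  moreover have "- \<Delta>*a0*\<bar>u-v\<bar> = \<Delta>*a0*(u-v)" using e by (simp add: abs_of_neg algebra_simps)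
  ultimately have "u - v \<ge> \<Delta>*a0*(u-v)" by linarith
  then have "(1 - \<Delta>*a0)*(u-v) \<ge> 0" by (simp add: algebra_simps)
  moreover have "(1 - \<Delta>*a0)*(u-v) < 0" using t e by (intro mult_pos_neg) auto
  ultimately show False by simp
qed

lemma arith2:
  fixes \<Delta> a0 u v cU cV fU fV S :: real
  assumes "\<Delta> > 0" "a0 < 1/\<Delta>" "u = cU + fU*\<Delta>" "v = cV + fV*\<Delta>"
    "\<bar>fU - fV\<bar> \<le> a0*\<bar>u-v\<bar> + S" "S = 0" "cU - cV = 0"
  shows "v = u"
proof (rule ccontr)
  assume "v \<noteq> u"
  then have e: "\<bar>u - v\<bar> > 0" by simp
  have t: "\<Delta> * a0 < 1" using assms(1,2) by (simp add: field_simps)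
  have "u - v = (fU - fV)*\<Delta>" using assms(3,4,7) by (simp add: algebra_simps)
  then have "\<bar>u - v\<bar> = \<bar>fU - fV\<bar> * \<Delta>" using assms(1) by (simp add: abs_mult)
  also have "\<dots> \<le> (a0*\<bar>u-v\<bar>) * \<Delta>" using assms(1,5,6) by (intro mult_right_mono) auto
  finally have "\<bar>u - v\<bar> \<le> (\<Delta>*a0) * \<bar>u-v\<bar>" by (simp add: algebra_simps)
  moreover have "(\<Delta>*a0) * \<bar>u-v\<bar> < 1 * \<bar>u-v\<bar>" using t e by (intro mult_strict_right_mono) auto
  ultimately show False by simp
qed

lemma neg_abs_mult: "0 \<le> c \<Longrightarrow> -(\<bar>b\<bar>*c) \<le> b*(c::real)"
proof -
  assume c: "0 \<le> c"
  have "-\<bar>b\<bar> \<le> b" by simp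
  then have "(-\<bar>b\<bar>)*c \<le> b*c" using c by (rule mult_right_mono)
  then show ?thesis by simp
qed

lemma step_common:
  fixes f' :: "'a \<Rightarrow> real \<Rightarrow> real^'d \<Rightarrow> real" and \<beta>' :: "'a \<Rightarrow> real^'d"
    and U V :: "'a \<Rightarrow> real"
  assumes sfs: "sigma_finite_subalgebra M G" and A: "A \<in> sets G"
    and U: "integrable M U" and V: "integrable M V"
    and bm: "\<beta>' \<in> borel_measurable M" and bb: "\<And>x. x \<in> space M \<Longrightarrow> norm (\<beta>' x) \<le> B"
    and IH: "AE x in M. x \<in> A \<longrightarrow> V x \<le> U x"
    and am: "\<And>d. \<alpha>' d \<in> borel_measurable G" and an: "\<And>d x. x \<in> space M \<Longrightarrow> \<alpha>' d x \<ge> 0"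
    and Dp: "\<Delta> > 0"
    and sm: "AE x in M. (\<Sum>d\<in>UNIV. \<alpha>' d x * \<bar>\<beta>' x $ d\<bar>) \<le> 1/\<Delta>"
  shows "AE x in M. x \<in> A \<longrightarrow>
      (\<Sum>d\<in>UNIV. \<alpha>' d x * \<bar>cond_exp_vec M G \<beta>' U x $ d - cond_exp_vec M G \<beta>' V x $ d\<bar>)
        \<le> (real_cond_exp M G U x - real_cond_exp M G V x) / \<Delta>"
proof -
  interpret sigma_finite_subalgebra M G by (rule sfs)
  have AM: "A \<in> sets M" using A subalg by (meson subalgebra_def subsetD)
  define \<delta> where "\<delta> \<eta> = indicator A \<eta> * (U \<eta> - V \<eta>)" for \<eta>
  have i\<delta>: "integrable M \<delta>"
    using integrable_mult_indicator[OF AM, of "\<lambda>\<eta>. U \<eta> - V \<eta>"] U V by (simp add: \<delta>_def[abs_def])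
  have m\<delta>[measurable]: "\<delta> \<in> borel_measurable M" using i\<delta> by measurable
  have \<delta>pos: "AE x in M. \<delta> x \<ge> 0"
    using IH by eventually_elim (auto simp: \<delta>_def split: split_indicator)
  have bdm[measurable]: "(\<lambda>x. \<beta>' x $ d) \<in> borel_measurable M" for d by (rule vecnth_meas[OF bm])
  have bdb: "\<bar>\<beta>' x $ d\<bar> \<le> B" if "x \<in> space M" for d x
    by (rule order_trans[OF component_le_norm_cart bb[OF that]])
  have amM[measurable]: "\<alpha>' d \<in> borel_measurable M" for d
    by (rule measurable_from_subalg[OF subalg am])
  have F1: "AE x in M. x \<in> A \<longrightarrow> real_cond_exp M G U x - real_cond_exp M G V x = real_cond_exp M G \<delta> x"
    using ce_loc_diff[OF sfs A U V, of "\<lambda>_. 1" 1] by (simp add: \<delta>_def[abs_def])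
  have F2: "AE x in M. \<forall>d\<in>UNIV. x \<in> A \<longrightarrow> cond_exp_vec M G \<beta>' U x $ d - cond_exp_vec M G \<beta>' V x $ d
       = real_cond_exp M G (\<lambda>\<eta>. \<beta>' \<eta> $ d * \<delta> \<eta>) x"
    by (rule AE_finite_allI) (use ce_loc_diff[OF sfs A U V bdm bdb] in \<open>simp_all add: \<delta>_def[abs_def] cond_exp_vec_def\<close>)
  have ib: "integrable M (\<lambda>\<eta>. \<beta>' \<eta> $ d * \<delta> \<eta>)" for d
    by (rule integrable_bdd_mult[OF i\<delta> bdm bdb])
  have iab: "integrable M (\<lambda>\<eta>. \<bar>\<beta>' \<eta> $ d\<bar> * \<delta> \<eta>)" for d
    by (rule integrable_bdd_mult[OF i\<delta>]) (use bdb in auto)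
  have iab': "integrable M (\<lambda>\<eta>. (-1) * (\<bar>\<beta>' \<eta> $ d\<bar> * \<delta> \<eta>))" for d
    using iab[of d] by simp
  have F4: "AE x in M. \<forall>d\<in>UNIV. \<bar>real_cond_exp M G (\<lambda>\<eta>. \<beta>' \<eta> $ d * \<delta> \<eta>) x\<bar>
       \<le> real_cond_exp M G (\<lambda>\<eta>. \<bar>\<beta>' \<eta> $ d\<bar> * \<delta> \<eta>) x"
  proof (rule AE_finite_allI)
    fix d :: 'd
    have m1: "AE x in M. real_cond_exp M G (\<lambda>\<eta>. \<beta>' \<eta> $ d * \<delta> \<eta>) x \<le> real_cond_exp M G (\<lambda>\<eta>. \<bar>\<beta>' \<eta> $ d\<bar> * \<delta> \<eta>) x"
      by (rule real_cond_exp_mono[OF _ ib iab]) (use \<delta>pos in \<open>eventually_elim, auto intro: mult_right_mono\<close>)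
    have m2: "AE x in M. real_cond_exp M G (\<lambda>\<eta>. (-1) * (\<bar>\<beta>' \<eta> $ d\<bar> * \<delta> \<eta>)) x \<le> real_cond_exp M G (\<lambda>\<eta>. \<beta>' \<eta> $ d * \<delta> \<eta>) x"
      by (rule real_cond_exp_mono[OF _ iab' ib]) (use \<delta>pos in \<open>eventually_elim, auto intro: neg_abs_mult\<close>)
    have m3: "AE x in M. real_cond_exp M G (\<lambda>\<eta>. (-1) * (\<bar>\<beta>' \<eta> $ d\<bar> * \<delta> \<eta>)) x = (-1) * real_cond_exp M G (\<lambda>\<eta>. \<bar>\<beta>' \<eta> $ d\<bar> * \<delta> \<eta>) x"
      by (rule real_cond_exp_cmult[OF iab])
    show "AE x in M. \<bar>real_cond_exp M G (\<lambda>\<eta>. \<beta>' \<eta> $ d * \<delta> \<eta>) x\<bar> \<le> real_cond_exp M G (\<lambda>\<eta>. \<bar>\<beta>' \<eta> $ d\<bar> * \<delta> \<eta>) x"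
      using m1 m2 m3 by eventually_elim auto
  qed simp
  have bnd: "AE x in M. \<forall>d\<in>UNIV. \<alpha>' d x * \<bar>\<beta>' x $ d\<bar> \<le> 1/\<Delta>"
    using sm AE_space
  proof eventually_elim
    case (elim x)
    show ?case
    proof
      fix d :: 'd
      have "\<alpha>' d x * \<bar>\<beta>' x $ d\<bar> \<le> (\<Sum>d\<in>UNIV. \<alpha>' d x * \<bar>\<beta>' x $ d\<bar>)"
        by (rule member_le_sum) (use an elim in auto)
      then show "\<alpha>' d x * \<bar>\<beta>' x $ d\<bar> \<le> 1/\<Delta>" using elim by simp
    qed
  qed
  have iaa: "integrable M (\<lambda>\<eta>. \<alpha>' d \<eta> * (\<bar>\<beta>' \<eta> $ d\<bar> * \<delta> \<eta>))" for d
  proof (rule Bochner_Integration.integrable_bound[where f="\<lambda>\<eta>. \<delta> \<eta> / \<Delta>"])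
    show "integrable M (\<lambda>\<eta>. \<delta> \<eta> / \<Delta>)" using i\<delta> by simp
    show "(\<lambda>\<eta>. \<alpha>' d \<eta> * (\<bar>\<beta>' \<eta> $ d\<bar> * \<delta> \<eta>)) \<in> borel_measurable M" by measurable
    show "AE x in M. norm (\<alpha>' d x * (\<bar>\<beta>' x $ d\<bar> * \<delta> x)) \<le> norm (\<delta> x / \<Delta>)"
      using bnd \<delta>pos AE_space
    proof eventually_elim
      case (elim x)
      have "\<alpha>' d x * \<bar>\<beta>' x $ d\<bar> * \<delta> x \<le> (1/\<Delta>) * \<delta> x"
        using elim by (intro mult_right_mono) auto
      moreover have "0 \<le> \<alpha>' d x * \<bar>\<beta>' x $ d\<bar> * \<delta> x" using elim an by simp
      ultimately show ?case using Dp elim by (simp add: abs_mult mult.assoc)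
    qed
  qed
  have F5: "AE x in M. \<forall>d\<in>UNIV. real_cond_exp M G (\<lambda>\<eta>. \<alpha>' d \<eta> * (\<bar>\<beta>' \<eta> $ d\<bar> * \<delta> \<eta>)) x
       = \<alpha>' d x * real_cond_exp M G (\<lambda>\<eta>. \<bar>\<beta>' \<eta> $ d\<bar> * \<delta> \<eta>) x"
  proof (rule AE_finite_allI)
    fix d :: 'd
    show "AE x in M. real_cond_exp M G (\<lambda>\<eta>. \<alpha>' d \<eta> * (\<bar>\<beta>' \<eta> $ d\<bar> * \<delta> \<eta>)) x
       = \<alpha>' d x * real_cond_exp M G (\<lambda>\<eta>. \<bar>\<beta>' \<eta> $ d\<bar> * \<delta> \<eta>) x"
      by (rule real_cond_exp_mult[OF am _ iaa]) simp
  qed simp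
  have F6: "AE x in M. real_cond_exp M G (\<lambda>\<eta>. \<Sum>d\<in>UNIV. \<alpha>' d \<eta> * (\<bar>\<beta>' \<eta> $ d\<bar> * \<delta> \<eta>)) x
       = (\<Sum>d\<in>UNIV. real_cond_exp M G (\<lambda>\<eta>. \<alpha>' d \<eta> * (\<bar>\<beta>' \<eta> $ d\<bar> * \<delta> \<eta>)) x)"
    by (rule real_cond_exp_sum[OF iaa])
  have F7: "AE x in M. real_cond_exp M G (\<lambda>\<eta>. \<Sum>d\<in>UNIV. \<alpha>' d \<eta> * (\<bar>\<beta>' \<eta> $ d\<bar> * \<delta> \<eta>)) x
       \<le> real_cond_exp M G (\<lambda>\<eta>. \<delta> \<eta> / \<Delta>) x"
  proof (rule real_cond_exp_mono)
    show "integrable M (\<lambda>\<eta>. \<Sum>d\<in>UNIV. \<alpha>' d \<eta> * (\<bar>\<beta>' \<eta> $ d\<bar> * \<delta> \<eta>))"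
      by (rule Bochner_Integration.integrable_sum) (rule iaa)
    show "integrable M (\<lambda>\<eta>. \<delta> \<eta> / \<Delta>)" using i\<delta> by simp
    show "AE x in M. (\<Sum>d\<in>UNIV. \<alpha>' d x * (\<bar>\<beta>' x $ d\<bar> * \<delta> x)) \<le> \<delta> x / \<Delta>"
      using sm \<delta>pos
    proof eventually_elim
      case (elim x)
      have "(\<Sum>d\<in>UNIV. \<alpha>' d x * (\<bar>\<beta>' x $ d\<bar> * \<delta> x)) = (\<Sum>d\<in>UNIV. \<alpha>' d x * \<bar>\<beta>' x $ d\<bar>) * \<delta> x"
        by (simp add: sum_distrib_right mult.assoc)
      also have "\<dots> \<le> (1/\<Delta>) * \<delta> x" using elim by (intro mult_right_mono) auto
      finally show ?case by simp
    qed
  qed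
  have F8: "AE x in M. real_cond_exp M G (\<lambda>\<eta>. \<delta> \<eta> / \<Delta>) x = real_cond_exp M G \<delta> x / \<Delta>"
    by (rule real_cond_exp_cdiv[OF i\<delta>])
  show ?thesis
    using F1 F2 F4 F5 F6 F7 F8 AE_space
  proof eventually_elim
    case (elim x)
    show ?case
    proof
      assume xA: "x \<in> A"
      have "(\<Sum>d\<in>UNIV. \<alpha>' d x * \<bar>cond_exp_vec M G \<beta>' U x $ d - cond_exp_vec M G \<beta>' V x $ d\<bar>)
          = (\<Sum>d\<in>UNIV. \<alpha>' d x * \<bar>real_cond_exp M G (\<lambda>\<eta>. \<beta>' \<eta> $ d * \<delta> \<eta>) x\<bar>)"
        using elim xA by simp
      also have "\<dots> \<le> (\<Sum>d\<in>UNIV. \<alpha>' d x * real_cond_exp M G (\<lambda>\<eta>. \<bar>\<beta>' \<eta> $ d\<bar> * \<delta> \<eta>) x)"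
        by (rule sum_mono, rule mult_left_mono) (use elim an in auto)
      also have "\<dots> = (\<Sum>d\<in>UNIV. real_cond_exp M G (\<lambda>\<eta>. \<alpha>' d \<eta> * (\<bar>\<beta>' \<eta> $ d\<bar> * \<delta> \<eta>)) x)"
        using elim by simp
      also have "\<dots> \<le> real_cond_exp M G \<delta> x / \<Delta>"
        using elim by simp
      also have "\<dots> = (real_cond_exp M G U x - real_cond_exp M G V x) / \<Delta>"
        using elim xA by simp
      finally show "(\<Sum>d\<in>UNIV. \<alpha>' d x * \<bar>cond_exp_vec M G \<beta>' U x $ d - cond_exp_vec M G \<beta>' V x $ d\<bar>)
        \<le> (real_cond_exp M G U x - real_cond_exp M G V x) / \<Delta>" .
    qed
  qed
qed

lemma step_common_eq:
  fixes \<beta>' :: "'a \<Rightarrow> real^'d" and U V :: "'a \<Rightarrow> real"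
  assumes sfs: "sigma_finite_subalgebra M G" and A: "A \<in> sets G"
    and U: "integrable M U" and V: "integrable M V"
    and bm: "\<beta>' \<in> borel_measurable M" and bb: "\<And>x. x \<in> space M \<Longrightarrow> norm (\<beta>' x) \<le> B"
    and IH: "AE x in M. x \<in> A \<longrightarrow> V x = U x"
  shows "AE x in M. x \<in> A \<longrightarrow> real_cond_exp M G U x - real_cond_exp M G V x = 0 \<and>
      (\<forall>d\<in>UNIV. cond_exp_vec M G \<beta>' U x $ d - cond_exp_vec M G \<beta>' V x $ d = 0)"
proof -
  interpret sigma_finite_subalgebra M G by (rule sfs)
  have AM: "A \<in> sets M" using A subalg by (meson subalgebra_def subsetD)
  define \<delta> where "\<delta> \<eta> = indicator A \<eta> * (U \<eta> - V \<eta>)" for \<eta>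
  have i\<delta>: "integrable M \<delta>"
    using integrable_mult_indicator[OF AM, of "\<lambda>\<eta>. U \<eta> - V \<eta>"] U V by (simp add: \<delta>_def[abs_def])
  have m\<delta>[measurable]: "\<delta> \<in> borel_measurable M" using i\<delta> by measurable
  have \<delta>0: "AE x in M. \<delta> x = 0"
    using IH by eventually_elim (auto simp: \<delta>_def split: split_indicator)
  have bdm[measurable]: "(\<lambda>x. \<beta>' x $ d) \<in> borel_measurable M" for d by (rule vecnth_meas[OF bm])
  have bdb: "\<bar>\<beta>' x $ d\<bar> \<le> B" if "x \<in> space M" for d x
    by (rule order_trans[OF component_le_norm_cart bb[OF that]])
  have F1: "AE x in M. x \<in> A \<longrightarrow> real_cond_exp M G U x - real_cond_exp M G V x = real_cond_exp M G \<delta> x"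
    using ce_loc_diff[OF sfs A U V, of "\<lambda>_. 1" 1] by (simp add: \<delta>_def[abs_def])
  have F2: "AE x in M. \<forall>d\<in>UNIV. x \<in> A \<longrightarrow> cond_exp_vec M G \<beta>' U x $ d - cond_exp_vec M G \<beta>' V x $ d
       = real_cond_exp M G (\<lambda>\<eta>. \<beta>' \<eta> $ d * \<delta> \<eta>) x"
    by (rule AE_finite_allI) (use ce_loc_diff[OF sfs A U V bdm bdb] in \<open>simp_all add: \<delta>_def[abs_def] cond_exp_vec_def\<close>)
  have Z1: "AE x in M. real_cond_exp M G \<delta> x = 0"
    by (rule ce_zero[OF sfs \<delta>0 m\<delta>])
  have Z2: "AE x in M. \<forall>d\<in>UNIV. real_cond_exp M G (\<lambda>\<eta>. \<beta>' \<eta> $ d * \<delta> \<eta>) x = 0"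
  proof (rule AE_finite_allI)
    fix d :: 'd
    show "AE x in M. real_cond_exp M G (\<lambda>\<eta>. \<beta>' \<eta> $ d * \<delta> \<eta>) x = 0"
      by (rule ce_zero[OF sfs]) (use \<delta>0 in \<open>eventually_elim, simp\<close>, measurable)
  qed simp
  show ?thesis using F1 F2 Z1 Z2 by eventually_elim auto
qed

lemma step_ineq:
  fixes f' :: "'a \<Rightarrow> real \<Rightarrow> real^'d \<Rightarrow> real" and \<beta>' :: "'a \<Rightarrow> real^'d"
    and U V u v :: "'a \<Rightarrow> real"
  assumes sfs: "sigma_finite_subalgebra M G" and A: "A \<in> sets G"
    and U: "integrable M U" and V: "integrable M V"
    and bm: "\<beta>' \<in> borel_measurable M" and bb: "\<And>x. x \<in> space M \<Longrightarrow> norm (\<beta>' x) \<le> B"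
    and IH: "AE x in M. x \<in> A \<longrightarrow> V x \<le> U x"
    and am: "\<And>d. \<alpha>' d \<in> borel_measurable G" and an: "\<And>d x. x \<in> space M \<Longrightarrow> \<alpha>' d x \<ge> 0"
    and Dp: "\<Delta> > 0"
    and sm: "AE x in M. (\<Sum>d\<in>UNIV. \<alpha>' d x * \<bar>\<beta>' x $ d\<bar>) \<le> 1/\<Delta>"
    and sm0: "AE x in M. \<alpha>0' x < 1/\<Delta>"
    and lip: "\<And>x y y' z z'. x \<in> space M \<Longrightarrow>
      \<bar>f' x y z - f' x y' z'\<bar> \<le> \<alpha>0' x * \<bar>y-y'\<bar> + (\<Sum>d\<in>UNIV. \<alpha>' d x * \<bar>z$d - z'$d\<bar>)"
    and hu: "AE x in M. u x \<ge> real_cond_exp M G U x + f' x (u x) (cond_exp_vec M G \<beta>' U x) * \<Delta>"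
    and hv: "AE x in M. x \<in> A \<longrightarrow> v x = real_cond_exp M G V x + f' x (v x) (cond_exp_vec M G \<beta>' V x) * \<Delta>"
  shows "AE x in M. x \<in> A \<longrightarrow> v x \<le> u x"
proof -
  have sp: "AE x in M. x \<in> space M" by (rule AE_space)
  have C: "AE x in M. x \<in> A \<longrightarrow>
      (\<Sum>d\<in>UNIV. \<alpha>' d x * \<bar>cond_exp_vec M G \<beta>' U x $ d - cond_exp_vec M G \<beta>' V x $ d\<bar>)
        \<le> (real_cond_exp M G U x - real_cond_exp M G V x) / \<Delta>"
    by (rule step_common[OF sfs A U V bm bb IH am an Dp sm])
  show ?thesis
  using C sm0 hu hv sp
  proof eventually_elim
  case (elim x)
  show ?case
  proof
    assume xA: "x \<in> A"
    show "v x \<le> u x"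
      by (rule arith1[OF Dp _ _ _ lip]) (use elim xA in auto)
  qed
qed
qed

lemma step_eq:
  fixes f' :: "'a \<Rightarrow> real \<Rightarrow> real^'d \<Rightarrow> real" and \<beta>' :: "'a \<Rightarrow> real^'d"
    and U V u v :: "'a \<Rightarrow> real"
  assumes sfs: "sigma_finite_subalgebra M G" and A: "A \<in> sets G"
    and U: "integrable M U" and V: "integrable M V"
    and bm: "\<beta>' \<in> borel_measurable M" and bb: "\<And>x. x \<in> space M \<Longrightarrow> norm (\<beta>' x) \<le> B"
    and IH: "AE x in M. x \<in> A \<longrightarrow> V x = U x"
    and Dp: "\<Delta> > 0"
    and sm0: "AE x in M. \<alpha>0' x < 1/\<Delta>"
    and lip: "\<And>x y y' z z'. x \<in> space M \<Longrightarrow>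
      \<bar>f' x y z - f' x y' z'\<bar> \<le> \<alpha>0' x * \<bar>y-y'\<bar> + (\<Sum>d\<in>UNIV. \<alpha>' d x * \<bar>z$d - z'$d\<bar>)"
    and hu: "AE x in M. x \<in> A \<longrightarrow> u x = real_cond_exp M G U x + f' x (u x) (cond_exp_vec M G \<beta>' U x) * \<Delta>"
    and hv: "AE x in M. x \<in> A \<longrightarrow> v x = real_cond_exp M G V x + f' x (v x) (cond_exp_vec M G \<beta>' V x) * \<Delta>"
  shows "AE x in M. x \<in> A \<longrightarrow> v x = u x"
proof -
  have sp: "AE x in M. x \<in> space M" by (rule AE_space)
  have C: "AE x in M. x \<in> A \<longrightarrow> real_cond_exp M G U x - real_cond_exp M G V x = 0 \<and>
      (\<forall>d\<in>UNIV. cond_exp_vec M G \<beta>' U x $ d - cond_exp_vec M G \<beta>' V x $ d = 0)"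
    by (rule step_common_eq[OF sfs A U V bm bb IH])
  show ?thesis
  using C sm0 hu hv sp
  proof eventually_elim
  case (elim x)
  show ?case
  proof
    assume xA: "x \<in> A"
    show "v x = u x"
      by (rule arith2[OF Dp _ _ _ lip]) (use elim xA in auto)
  qed
qed
qed



theorem proposition2p1:
  fixes M :: "'a measure" and F :: "nat \<Rightarrow> 'a measure" and n :: nat
    and \<Delta> :: "nat \<Rightarrow> real"
    and S :: "nat \<Rightarrow> 'a \<Rightarrow> ereal"
    and f :: "nat \<Rightarrow> 'a \<Rightarrow> real \<Rightarrow> real ^ 'd \<Rightarrow> real"
    and \<alpha>0 :: "nat \<Rightarrow> 'a \<Rightarrow> real" and \<alpha> :: "'d \<Rightarrow> nat \<Rightarrow> 'a \<Rightarrow> real"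
    and \<beta> :: "nat \<Rightarrow> 'a \<Rightarrow> real ^ 'd"
    and Y :: "nat \<Rightarrow> 'a \<Rightarrow> real"
    and Yt :: "('a \<Rightarrow> nat) \<Rightarrow> nat \<Rightarrow> 'a \<Rightarrow> real"
    and i :: nat
  assumes n_pos: "n \<ge> 1"
    and prob: "prob_space M"
    and filt_sub: "\<And>j. j \<le> n \<Longrightarrow> subalgebra M (F j)"
    and filt_mono: "\<And>j k. j \<le> k \<Longrightarrow> k \<le> n \<Longrightarrow> sets (F j) \<subseteq> sets (F k)"
    and Delta_pos: "\<And>j. j < n \<Longrightarrow> \<Delta> j > 0"
    (* S: adapted, values in R \<union> {-\<infinity>}, S_n real, integrability *)
    and S_meas: "\<And>j. j \<le> n \<Longrightarrow> S j \<in> borel_measurable (F j)"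
    and S_not_pinf: "\<And>j \<omega>. j \<le> n \<Longrightarrow> \<omega> \<in> space M \<Longrightarrow> S j \<omega> \<noteq> \<infinity>"
    and S_n_real: "\<And>\<omega>. \<omega> \<in> space M \<Longrightarrow> S n \<omega> \<noteq> -\<infinity>"
    and S_int: "\<And>j. j \<le> n \<Longrightarrow> integrable M (\<lambda>\<omega>. real_of_ereal (S j \<omega>))"
    (* f: measurability, integrability of f(i,0,0), Lipschitz condition *)
    and f_joint_meas: "\<And>j. j < n \<Longrightarrow>
          (\<lambda>(\<omega>, y, z). f j \<omega> y z) \<in> borel_measurable (M \<Otimes>\<^sub>M (borel \<Otimes>\<^sub>M borel))"
    and f_adapted: "\<And>j y z. j < n \<Longrightarrow> (\<lambda>\<omega>. f j \<omega> y z) \<in> borel_measurable (F j)"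
    and f_int: "\<And>j. j < n \<Longrightarrow> integrable M (\<lambda>\<omega>. f j \<omega> 0 0)"
    and alpha0_meas: "\<And>j. j \<le> n \<Longrightarrow> \<alpha>0 j \<in> borel_measurable (F j)"
    and alpha_meas: "\<And>d j. j \<le> n \<Longrightarrow> \<alpha> d j \<in> borel_measurable (F j)"
    and alpha0_nonneg: "\<And>j \<omega>. j \<le> n \<Longrightarrow> \<omega> \<in> space M \<Longrightarrow> \<alpha>0 j \<omega> \<ge> 0"
    and alpha_nonneg: "\<And>d j \<omega>. j \<le> n \<Longrightarrow> \<omega> \<in> space M \<Longrightarrow> \<alpha> d j \<omega> \<ge> 0"
    and f_lip: "\<And>j \<omega> y y' z z'. j < n \<Longrightarrow> \<omega> \<in> space M \<Longrightarrow>
          \<bar>f j \<omega> y z - f j \<omega> y' z'\<bar> \<le> \<alpha>0 j \<omega> * \<bar>y - y'\<bar> + (\<Sum>d\<in>UNIV. \<alpha> d j \<omega> * \<bar>z $ d - z' $ d\<bar>)"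
    (* beta: bounded adapted *)
    and beta_meas: "\<And>j. 1 \<le> j \<Longrightarrow> j \<le> n \<Longrightarrow> \<beta> j \<in> borel_measurable (F j)"
    and beta_bdd: "\<exists>B. \<forall>j\<in>{1..n}. \<forall>\<omega>\<in>space M. norm (\<beta> j \<omega>) \<le> B"
    and alpha0_small: "\<And>j. j < n \<Longrightarrow> AE \<omega> in M. \<alpha>0 j \<omega> < 1 / \<Delta> j"
    and alpha_beta_small: "\<And>j. j < n \<Longrightarrow>
          AE \<omega> in M. (\<Sum>d\<in>UNIV. \<alpha> d j \<omega> * \<bar>\<beta> (Suc j) \<omega> $ d\<bar>) \<le> 1 / \<Delta> j"
    (* Y: the adapted integrable solution of the reflected recursion *)
    and Y_meas: "\<And>j. j \<le> n \<Longrightarrow> Y j \<in> borel_measurable (F j)"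
    and Y_int: "\<And>j. j \<le> n \<Longrightarrow> integrable M (Y j)"
    and Y_term: "AE \<omega> in M. ereal (Y n \<omega>) = S n \<omega>"
    and Y_rec: "\<And>j. j < n \<Longrightarrow>
          AE \<omega> in M. ereal (Y j \<omega>) = max (S j \<omega>) (ereal (driver M F f \<beta> \<Delta> Y j \<omega>))"
    (* Y^(tau): for each tau in Sbar_i, the adapted integrable solution of the stopped recursion *)
    and i_le: "i \<le> n"
    and Yt_meas: "\<And>\<tau> j. \<tau> \<in> Sbar M F S n i \<Longrightarrow> i \<le> j \<Longrightarrow> j \<le> n \<Longrightarrow>
          Yt \<tau> j \<in> borel_measurable (F j)"
    and Yt_int: "\<And>\<tau> j. \<tau> \<in> Sbar M F S n i \<Longrightarrow> i \<le> j \<Longrightarrow> j \<le> n \<Longrightarrow> integrable M (Yt \<tau> j)"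
    and Yt_term: "\<And>\<tau>. \<tau> \<in> Sbar M F S n i \<Longrightarrow>
          AE \<omega> in M. ereal (Yt \<tau> (\<tau> \<omega>) \<omega>) = S (\<tau> \<omega>) \<omega>"
    and Yt_rec: "\<And>\<tau> j. \<tau> \<in> Sbar M F S n i \<Longrightarrow> i \<le> j \<Longrightarrow> j < n \<Longrightarrow>
          AE \<omega> in M. j < \<tau> \<omega> \<longrightarrow> Yt \<tau> j \<omega> = driver M F f \<beta> \<Delta> (Yt \<tau>) j \<omega>"
  shows "is_esssup_family M (Sbar M F S n i) (\<lambda>\<tau>. Yt \<tau> i) (Y i)
       \<and> tau_star M F f \<beta> \<Delta> S Y n i \<in> Sbar M F S n i
       \<and> (AE \<omega> in M. Y i \<omega> = Yt (tau_star M F f \<beta> \<Delta> S Y n i) i \<omega>)"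
proof -
  interpret P: prob_space M by (rule prob)
  have sfs: "sigma_finite_subalgebra M (F j)" if "j \<le> n" for j
    by (intro finite_measure_subalgebra_is_sigma_finite)
      (simp add: finite_measure_subalgebra_def finite_measure_subalgebra_axioms_def
        filt_sub[OF that] P.finite_measure_axioms)
  have spF: "space (F j) = space M" if "j \<le> n" for j
    using filt_sub[OF that] by (simp add: subalgebra_def)
  have measM: "g \<in> borel_measurable M" if "g \<in> borel_measurable (F j)" "j \<le> n" for g :: "'a \<Rightarrow> real" and j
    by (rule measurable_from_subalg[OF filt_sub[OF that(2)] that(1)])
  have measmono: "g \<in> borel_measurable (F t)" if "g \<in> borel_measurable (F j)" "j \<le> t" "t \<le> n"
    for g :: "'a \<Rightarrow> 'b::topological_space" and j t
    using that(1) filt_mono[OF that(2,3)] spF[of j] spF[of t] that(2,3)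
    by (auto simp: measurable_def)
  obtain B where B: "\<And>j \<omega>. j \<in> {1..n} \<Longrightarrow> \<omega> \<in> space M \<Longrightarrow> norm (\<beta> j \<omega>) \<le> B"
    using beta_bdd by blast
  have sp: "AE x in M. x \<in> space M" by (rule AE_space)
  have YS: "AE \<omega> in M. S j \<omega> \<le> ereal (Y j \<omega>)" if "j \<le> n" for j
  proof (cases "j = n")
    case True show ?thesis using Y_term unfolding True by eventually_elim simp
  next
    case False
    then have "j < n" using that by simp
    show ?thesis using Y_rec[OF \<open>j < n\<close>] by eventually_elim simp
  qed
  have Ydr: "AE \<omega> in M. driver M F f \<beta> \<Delta> Y j \<omega> \<le> Y j \<omega>" if "j < n" for j
    using Y_rec[OF that] by eventually_elim (metis ereal_less_eq(3) max.cobounded2)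
  have bmS: "\<beta> (Suc j) \<in> borel_measurable M" if "j < n" for j
    using beta_meas[of "Suc j"] that filt_sub[of "Suc j"]
    by (intro measurable_from_subalg[of M "F (Suc j)"]) auto
  have bbS: "\<And>x. x \<in> space M \<Longrightarrow> norm (\<beta> (Suc j) x) \<le> B" if "j < n" for j
    using B[of "Suc j"] that by auto
  have cmp: "AE \<omega> in M. j \<le> \<tau> \<omega> \<longrightarrow> Yt \<tau> j \<omega> \<le> Y j \<omega>"
    if \<tau>: "\<tau> \<in> Sbar M F S n i" and ij: "i \<le> j" and jn: "j \<le> n" for \<tau> j
  proof -
    have \<tau>st: "stopping_time F \<tau>" and \<tau>b: "\<And>\<omega>. \<omega> \<in> space M \<Longrightarrow> i \<le> \<tau> \<omega> \<and> \<tau> \<omega> \<le> n"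
      using \<tau> by (auto simp: Sbar_def)
    show ?thesis using jn
    proof (induction j rule: inc_induct)
      case base
      show ?case using Yt_term[OF \<tau>] Y_term sp
      proof eventually_elim
        case (elim \<omega>)
        show ?case
        proof
          assume "n \<le> \<tau> \<omega>"
          then have "\<tau> \<omega> = n" using \<tau>b[OF elim(3)] by simp
          then have "ereal (Yt \<tau> n \<omega>) = ereal (Y n \<omega>)" using elim(1,2) by simp
          then show "Yt \<tau> n \<omega> \<le> Y n \<omega>" by simp
        qed
      qed
    next
      case (step j)
      have ij': "i \<le> j" using ij step.hyps(1) by simp
      define A where "A = {\<omega> \<in> space M. j < \<tau> \<omega>}"
      have A: "A \<in> sets (F j)"
      proof -
        have "Measurable.pred (F j) (\<lambda>x. \<tau> x \<le> j)" using \<tau>st by (simp add: stopping_time_def)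
        then have "Measurable.pred (F j) (\<lambda>x. \<not> \<tau> x \<le> j)" by measurable
        then show ?thesis using spF[of j] step.hyps(2) by (simp add: pred_def A_def not_le)
      qed
      have IH: "AE x in M. x \<in> A \<longrightarrow> Yt \<tau> (Suc j) x \<le> Y (Suc j) x"
        using step.IH by eventually_elim (auto simp: A_def)
      have hv: "AE x in M. x \<in> A \<longrightarrow> Yt \<tau> j x = real_cond_exp M (F j) (Yt \<tau> (Suc j)) x
          + f j x (Yt \<tau> j x) (cond_exp_vec M (F j) (\<beta> (Suc j)) (Yt \<tau> (Suc j)) x) * \<Delta> j"
        using Yt_rec[OF \<tau> ij' step.hyps(2)] by eventually_elim (auto simp: A_def driver_def)
      have hu: "AE x in M. Y j x \<ge> real_cond_exp M (F j) (Y (Suc j)) x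
          + f j x (Y j x) (cond_exp_vec M (F j) (\<beta> (Suc j)) (Y (Suc j)) x) * \<Delta> j"
        using Ydr[OF step.hyps(2)] by (simp add: driver_def)
      have onA: "AE x in M. x \<in> A \<longrightarrow> Yt \<tau> j x \<le> Y j x"
      proof (rule step_ineq[OF sfs[of j] A Y_int[of "Suc j"] Yt_int[OF \<tau>, of "Suc j"] bmS[of j] bbS[of j] IH
            _ _ Delta_pos[of j] alpha_beta_small[of j] alpha0_small[of j] f_lip hu hv])
        show "\<And>d. \<alpha> d j \<in> borel_measurable (F j)" using alpha_meas step.hyps(2) by simp
        show "\<And>d x. x \<in> space M \<Longrightarrow> 0 \<le> \<alpha> d j x" using alpha_nonneg step.hyps(2) by simp
      qed (use step.hyps(2) ij' in auto)
      show ?case using onA Yt_term[OF \<tau>] YS[OF less_imp_le[OF step.hyps(2)]] sp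
      proof eventually_elim
        case (elim x)
        show ?case
        proof
          assume "j \<le> \<tau> x"
          then consider "\<tau> x = j" | "j < \<tau> x" by linarith
          then show "Yt \<tau> j x \<le> Y j x"
          proof cases
            case 1 then show ?thesis using elim by (metis ereal_less_eq(3))
          next
            case 2 then show ?thesis using elim by (auto simp: A_def)
          qed
        qed
      qed
    qed
  qed
  define ts where "ts = tau_star M F f \<beta> \<Delta> S Y n i"
  define Pt where "Pt \<omega> j \<longleftrightarrow> i \<le> j \<and> (j = n \<or> (j < n \<and> S j \<omega> \<ge> ereal (driver M F f \<beta> \<Delta> Y j \<omega>)))" for \<omega> j
  have ts_eq: "ts \<omega> = (LEAST j. Pt \<omega> j)" for \<omega>
    by (simp add: ts_def tau_star_def Pt_def)
  have Ptn: "Pt \<omega> n" for \<omega> using i_le by (simp add: Pt_def)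
  have tsP: "Pt \<omega> (ts \<omega>)" for \<omega> unfolding ts_eq by (rule LeastI[of "Pt \<omega>", OF Ptn])
  have ts_le: "ts \<omega> \<le> n" for \<omega> unfolding ts_eq by (rule Least_le[of "Pt \<omega>", OF Ptn])
  have ts_ge: "i \<le> ts \<omega>" for \<omega> using tsP[of \<omega>] by (simp add: Pt_def)
  have ts_not: "\<not> Pt \<omega> j" if "j < ts \<omega>" for \<omega> j using that unfolding ts_eq by (rule not_less_Least)
  have drm: "driver M F f \<beta> \<Delta> Y j \<in> borel_measurable (F j)" if "j < n" for j
  proof -
    have jn: "j \<le> n" using that by simp
    have "(\<lambda>\<omega>. f j \<omega> (Y j \<omega>) (cond_exp_vec M (F j) (\<beta> (Suc j)) (Y (Suc j)) \<omega>)) \<in> borel_measurable (F j)"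
    proof (rule carath[where a="\<alpha>0 j" and b="\<lambda>d. \<alpha> d j" and f="f j" and g="Y j" and h="cond_exp_vec M (F j) (\<beta> (Suc j)) (Y (Suc j))"])
      show "\<And>y z. (\<lambda>\<omega>. f j \<omega> y z) \<in> borel_measurable (F j)" using f_adapted that by simp
      show "\<And>\<omega> y y' z z'. \<omega> \<in> space (F j) \<Longrightarrow> \<bar>f j \<omega> y z - f j \<omega> y' z'\<bar>
          \<le> \<alpha>0 j \<omega> * \<bar>y - y'\<bar> + (\<Sum>d\<in>UNIV. \<alpha> d j \<omega> * \<bar>z $ d - z' $ d\<bar>)"
        using f_lip that spF[OF jn] by simp
      show "Y j \<in> borel_measurable (F j)" using Y_meas jn by simp
      show "\<And>d. (\<lambda>\<omega>. cond_exp_vec M (F j) (\<beta> (Suc j)) (Y (Suc j)) \<omega> $ d) \<in> borel_measurable (F j)"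
        by (simp add: cond_exp_vec_def)
    qed
    then show ?thesis unfolding driver_def[abs_def] by measurable
  qed
  have ts_st: "stopping_time F ts"
    unfolding stopping_time_def
  proof
    fix t
    show "Measurable.pred (F t) (\<lambda>x. ts x \<le> t)"
    proof (cases "n \<le> t")
      case True
      then have "(\<lambda>x. ts x \<le> t) = (\<lambda>x. True)" using ts_le by (auto intro: order_trans)
      then show ?thesis by simp
    next
      case False
      have eq: "(\<lambda>x. ts x \<le> t) = (\<lambda>x. \<exists>j\<in>{i..t}. ereal (driver M F f \<beta> \<Delta> Y j x) \<le> S j x)"
      proof (rule ext, rule iffI)
        fix x assume a: "ts x \<le> t"
        then show "\<exists>j\<in>{i..t}. ereal (driver M F f \<beta> \<Delta> Y j x) \<le> S j x"
          using tsP[of x] False ts_ge[of x] by (intro bexI[of _ "ts x"]) (auto simp: Pt_def)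
      next
        fix x assume "\<exists>j\<in>{i..t}. ereal (driver M F f \<beta> \<Delta> Y j x) \<le> S j x"
        then obtain j where j: "j \<in> {i..t}" "ereal (driver M F f \<beta> \<Delta> Y j x) \<le> S j x" by blast
        then have "Pt x j" using False by (auto simp: Pt_def)
        then have "ts x \<le> j" unfolding ts_eq by (rule Least_le)
        then show "ts x \<le> t" using j by simp
      qed
      have "Measurable.pred (F t) (\<lambda>x. ereal (driver M F f \<beta> \<Delta> Y j x) \<le> S j x)" if "j \<in> {i..t}" for j
      proof -
        have jt: "j \<le> t" "t \<le> n" "j < n" using that False by auto
        have [measurable]: "driver M F f \<beta> \<Delta> Y j \<in> borel_measurable (F t)"
          by (rule measmono[OF drm[OF jt(3)] jt(1,2)])
        have [measurable]: "S j \<in> borel_measurable (F t)"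
          by (rule measmono[OF S_meas jt(1,2)]) (use jt in simp)
        show ?thesis by measurable
      qed
      then show ?thesis unfolding eq by (intro pred_intros_finite) auto
    qed
  qed
  have ts_Sbar: "ts \<in> Sbar M F S n i"
    unfolding Sbar_def
  proof (intro CollectI conjI ts_st ballI)
    fix \<omega> assume \<omega>: "\<omega> \<in> space M"
    show "i \<le> ts \<omega>" by (rule ts_ge)
    show "ts \<omega> \<le> n" by (rule ts_le)
    show "S (ts \<omega>) \<omega> \<noteq> - \<infinity>"
      using tsP[of \<omega>] S_n_real[OF \<omega>] by (auto simp: Pt_def)
  qed
  have opt: "AE \<omega> in M. j \<le> ts \<omega> \<longrightarrow> Yt ts j \<omega> = Y j \<omega>" if ij: "i \<le> j" and jn: "j \<le> n" for j
    using jn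
  proof (induction j rule: inc_induct)
    case base
    show ?case using Yt_term[OF ts_Sbar] Y_term
    proof eventually_elim
      case (elim \<omega>)
      show ?case
      proof
        assume "n \<le> ts \<omega>"
        then have "ts \<omega> = n" using ts_le[of \<omega>] by simp
        then have "ereal (Yt ts n \<omega>) = ereal (Y n \<omega>)" using elim(1,2) by simp
        then show "Yt ts n \<omega> = Y n \<omega>" by simp
      qed
    qed
  next
    case (step j)
    have ij': "i \<le> j" using ij step.hyps(1) by simp
    define A where "A = {\<omega> \<in> space M. j < ts \<omega>}"
    have A: "A \<in> sets (F j)"
    proof -
      have "Measurable.pred (F j) (\<lambda>x. ts x \<le> j)" using ts_st by (simp add: stopping_time_def)
      then have "Measurable.pred (F j) (\<lambda>x. \<not> ts x \<le> j)" by measurable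
      then show ?thesis using spF[of j] step.hyps(2) by (simp add: pred_def A_def not_le)
    qed
    have IH: "AE x in M. x \<in> A \<longrightarrow> Yt ts (Suc j) x = Y (Suc j) x"
      using step.IH by eventually_elim (auto simp: A_def)
    have hv: "AE x in M. x \<in> A \<longrightarrow> Yt ts j x = real_cond_exp M (F j) (Yt ts (Suc j)) x
        + f j x (Yt ts j x) (cond_exp_vec M (F j) (\<beta> (Suc j)) (Yt ts (Suc j)) x) * \<Delta> j"
      using Yt_rec[OF ts_Sbar ij' step.hyps(2)] by eventually_elim (auto simp: A_def driver_def)
    have hu: "AE x in M. x \<in> A \<longrightarrow> Y j x = real_cond_exp M (F j) (Y (Suc j)) x
        + f j x (Y j x) (cond_exp_vec M (F j) (\<beta> (Suc j)) (Y (Suc j)) x) * \<Delta> j"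
      using Y_rec[OF step.hyps(2)]
    proof eventually_elim
      case (elim x)
      show ?case
      proof
        assume "x \<in> A"
        then have "\<not> Pt x j" by (intro ts_not) (simp add: A_def)
        then have "\<not> S j x \<ge> ereal (driver M F f \<beta> \<Delta> Y j x)" using ij' step.hyps(2) by (simp add: Pt_def)
        then have "S j x \<le> ereal (driver M F f \<beta> \<Delta> Y j x)" by simp
        then have "ereal (Y j x) = ereal (driver M F f \<beta> \<Delta> Y j x)" using elim by (simp add: max_absorb2)
        then show "Y j x = real_cond_exp M (F j) (Y (Suc j)) x
        + f j x (Y j x) (cond_exp_vec M (F j) (\<beta> (Suc j)) (Y (Suc j)) x) * \<Delta> j"
          by (simp add: driver_def)
      qed
    qed
    have onA: "AE x in M. x \<in> A \<longrightarrow> Yt ts j x = Y j x"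
      by (rule step_eq[OF sfs[of j] A Y_int[of "Suc j"] Yt_int[OF ts_Sbar, of "Suc j"] bmS[of j] bbS[of j] IH
            Delta_pos[of j] alpha0_small[of j] f_lip hu hv]) (use step.hyps(2) ij' in auto)
    show ?case using onA Yt_term[OF ts_Sbar] Y_rec[OF step.hyps(2)] sp
    proof eventually_elim
      case (elim x)
      show ?case
      proof
        assume "j \<le> ts x"
        then consider "ts x = j" | "j < ts x" by linarith
        then show "Yt ts j x = Y j x"
        proof cases
          case 1
          then have "S j x \<ge> ereal (driver M F f \<beta> \<Delta> Y j x)"
            using tsP[of x] step.hyps(2) by (auto simp: Pt_def)
          then have YSj: "ereal (Y j x) = S j x" using elim by (simp add: max_def)
          have "ereal (Yt ts j x) = S j x" using elim 1 by simp
          then have "ereal (Yt ts j x) = ereal (Y j x)" using YSj by simp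
          then show ?thesis by simp
        next
          case 2 then show ?thesis using elim by (auto simp: A_def)
        qed
      qed
    qed
  qed
  have optI: "AE \<omega> in M. Y i \<omega> = Yt ts i \<omega>"
    using opt[OF order_refl i_le] by eventually_elim (use ts_ge in auto)
  have ess: "is_esssup_family M (Sbar M F S n i) (\<lambda>\<tau>. Yt \<tau> i) (Y i)"
    unfolding is_esssup_family_def
  proof (intro conjI ballI impI)
    show "Y i \<in> borel_measurable M" by (rule measM[OF Y_meas[OF i_le] i_le])
    fix \<tau> assume \<tau>: "\<tau> \<in> Sbar M F S n i"
    show "AE \<omega> in M. Yt \<tau> i \<omega> \<le> Y i \<omega>"
      using cmp[OF \<tau> order_refl i_le] sp by eventually_elim (use \<tau> in \<open>auto simp: Sbar_def\<close>)
  next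
    fix Z' :: "'a \<Rightarrow> real" assume "\<forall>t\<in>Sbar M F S n i. AE \<omega> in M. Yt t i \<omega> \<le> Z' \<omega>"
    then have "AE \<omega> in M. Yt ts i \<omega> \<le> Z' \<omega>" using ts_Sbar by blast
    then show "AE \<omega> in M. Y i \<omega> \<le> Z' \<omega>" using optI by eventually_elim simp
  qed
  show ?thesis using ess ts_Sbar optI by (simp add: ts_def)
qed


end
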